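(* Let $R'\subseteq R$ be (not necessarily commutative) subrings of a $\mathbb Q$-algebra and let $d\ge1$ be an integer with $dR\subseteq R'$. Then $|R^\times/R'^\times|\le|R/dR|$.
   Context: $R^\times$ denotes the unit group of $R$, and $R^\times/R'^\times$ the set of cosets of the subgroup $R'^\times$. *)

theory Defs
  imports Main "HOL-Library.Equipollence"
begin

text \<open>A (unital, not necessarily commutative) ring A is a Q-algebra iff every positive
integer n is invertible in A (the Q-algebra structure is then unique).\<close>
definition is_Q_algebra :: "'a::ring_1 itself \<Rightarrow> bool" where
  "is_Q_algebra _ \<longleftrightarrow>
     (\<forall>n::nat. n > 0 \<longrightarrow> (\<exists>y::'a. of_nat n * y = 1 \<and> y * of_nat n = 1))"

definition subring_of :: "'a::ring_1 set \<Rightarrow> bool" where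
  "subring_of S \<longleftrightarrow> 0 \<in> S \<and> 1 \<in> S \<and>
     (\<forall>x\<in>S. \<forall>y\<in>S. x + y \<in> S \<and> x * y \<in> S) \<and> (\<forall>x\<in>S. - x \<in> S)"

definition units_of_ring :: "'a::ring_1 set \<Rightarrow> 'a set" where
  "units_of_ring S = {x \<in> S. \<exists>y\<in>S. x * y = 1 \<and> y * x = 1}"

definition unit_cosets :: "'a::ring_1 set \<Rightarrow> 'a set \<Rightarrow> 'a set set" where
  "unit_cosets S S' = (\<lambda>x. (\<lambda>u. x * u) ` units_of_ring S') ` units_of_ring S"

definition mult_set :: "nat \<Rightarrow> 'a::ring_1 set \<Rightarrow> 'a set" where
  "mult_set d S = (\<lambda>r. of_nat d * r) ` S"

definition quot_mult :: "'a::ring_1 set \<Rightarrow> nat \<Rightarrow> 'a set set" where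
  "quot_mult S d = (\<lambda>x. (\<lambda>r. x + r) ` mult_set d S) ` S"

end

theory Submission
  imports Defs
begin

lemma units_mult:
  assumes "subring_of S" "a \<in> units_of_ring S" "b \<in> units_of_ring S"
  shows "a * b \<in> units_of_ring S"
proof -
  obtain a' where a': "a' \<in> S" "a * a' = 1" "a' * a = 1" "a \<in> S" using assms(2) by (auto simp: units_of_ring_def)
  obtain b' where b': "b' \<in> S" "b * b' = 1" "b' * b = 1" "b \<in> S" using assms(3) by (auto simp: units_of_ring_def)
  have "a * b * (b' * a') = 1" by (metis a'(2) b'(2) mult.assoc mult_1_left)
  moreover have "(b' * a') * (a * b) = 1" by (metis a'(3) b'(3) mult.assoc mult_1_left)
  ultimately show ?thesis using a' b' assms(1) unfolding units_of_ring_def subring_of_def by blast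
qed

lemma key:
  assumes R: "subring_of R" and R': "subring_of R'" and sub: "mult_set d R \<subseteq> R'"
    and x: "x \<in> units_of_ring R" and y: "y \<in> units_of_ring R"
    and r: "r \<in> R" and xy: "x = y + of_nat d * r"
  shows "(\<lambda>u. x * u) ` units_of_ring R' = (\<lambda>u. y * u) ` units_of_ring R'"
proof -
  obtain xi where xi: "xi \<in> R" "x * xi = 1" "xi * x = 1" using x by (auto simp: units_of_ring_def)
  obtain yi where yi: "yi \<in> R" "y * yi = 1" "yi * y = 1" using y by (auto simp: units_of_ring_def)
  have yir: "yi * r \<in> R" "xi * (- r) \<in> R" using R yi xi r unfolding subring_of_def by auto
  define w where "w = yi * x"
  define v where "v = xi * y"
  have w: "w = 1 + of_nat d * (yi * r)"
  proof -
    have "yi * x = yi * y + (yi * of_nat d) * r" unfolding xy by (simp add: distrib_left mult.assoc)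
    also have "\<dots> = 1 + of_nat d * (yi * r)" by (simp add: yi mult_of_nat_commute mult.assoc)
    finally show ?thesis unfolding w_def .
  qed
  have yx: "y = x + of_nat d * (- r)" using xy by simp
  have v: "v = 1 + of_nat d * (xi * (- r))"
  proof -
    have "xi * y = xi * x + (xi * of_nat d) * (- r)" unfolding yx by (simp only: distrib_left mult.assoc)
    also have "\<dots> = 1 + of_nat d * (xi * (- r))" by (simp only: xi mult_of_nat_commute mult.assoc)
    finally show ?thesis unfolding v_def .
  qed
  have d1: "of_nat d * (yi * r) \<in> R'" "of_nat d * (xi * (- r)) \<in> R'"
    using sub yir unfolding mult_set_def by auto
  have wR: "w \<in> R'" "v \<in> R'" using R' d1 w v unfolding subring_of_def by auto
  have "w * v = 1"
    unfolding w_def v_def by (metis mult.assoc mult_1_left xi(2) yi(3))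
  moreover have "v * w = 1"
    unfolding w_def v_def by (metis mult.assoc mult_1_left xi(3) yi(2))
  ultimately have U: "w \<in> units_of_ring R'" "v \<in> units_of_ring R'"
    using wR unfolding units_of_ring_def by blast+
  have xw: "x = y * w" unfolding w_def by (metis mult.assoc mult_1_left yi(2))
  have yv: "y = x * v" unfolding v_def by (metis mult.assoc mult_1_left xi(2))
  show ?thesis
  proof
    show "(\<lambda>u. x * u) ` units_of_ring R' \<subseteq> (\<lambda>u. y * u) ` units_of_ring R'"
    proof
      fix z assume "z \<in> (\<lambda>u. x * u) ` units_of_ring R'"
      then obtain u where u: "u \<in> units_of_ring R'" "z = x * u" by auto
      have "w * u \<in> units_of_ring R'" using units_mult[OF R' U(1) u(1)] .
      moreover have "z = y * (w * u)" using u xw by (simp add: mult.assoc)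
      ultimately show "z \<in> (\<lambda>u. y * u) ` units_of_ring R'" by blast
    qed
  next
    show "(\<lambda>u. y * u) ` units_of_ring R' \<subseteq> (\<lambda>u. x * u) ` units_of_ring R'"
    proof
      fix z assume "z \<in> (\<lambda>u. y * u) ` units_of_ring R'"
      then obtain u where u: "u \<in> units_of_ring R'" "z = y * u" by auto
      have "v * u \<in> units_of_ring R'" using units_mult[OF R' U(2) u(1)] .
      moreover have "z = x * (v * u)" using u yv by (simp add: mult.assoc)
      ultimately show "z \<in> (\<lambda>u. x * u) ` units_of_ring R'" by blast
    qed
  qed
qed

theorem lemma10p11:
  fixes R R' :: "'a::ring_1 set" and d :: nat
  assumes "is_Q_algebra TYPE('a)"
    and "subring_of R" and "subring_of R'" and "R' \<subseteq> R"
    and "d \<ge> 1" and "mult_set d R \<subseteq> R'"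
  shows "unit_cosets R R' \<lesssim> quot_mult R d"
proof -
  define rep where "rep C = (SOME x. x \<in> units_of_ring R \<and> C = (\<lambda>u. x * u) ` units_of_ring R')" for C
  define f where "f C = (\<lambda>r. rep C + r) ` mult_set d R" for C
  have rep: "rep C \<in> units_of_ring R \<and> C = (\<lambda>u. rep C * u) ` units_of_ring R'"
    if "C \<in> unit_cosets R R'" for C
    using that unfolding rep_def unit_cosets_def by (rule imageE) (rule someI, blast)
  have "inj_on f (unit_cosets R R')"
  proof (rule inj_onI)
    fix C D assume C: "C \<in> unit_cosets R R'" and D: "D \<in> unit_cosets R R'" and eq: "f C = f D"
    have "0 \<in> mult_set d R" using assms(2) unfolding mult_set_def subring_of_def by force
    hence "rep C + 0 \<in> f D" using eq unfolding f_def by blast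
    then obtain r where r: "r \<in> R" "rep C = rep D + of_nat d * r"
      unfolding f_def mult_set_def by auto
    show "C = D" using key[OF assms(2,3,6) _ _ r] rep[OF C] rep[OF D] by metis
  qed
  moreover have "f ` unit_cosets R R' \<subseteq> quot_mult R d"
  proof
    fix K assume "K \<in> f ` unit_cosets R R'"
    then obtain C where "C \<in> unit_cosets R R'" "K = f C" by auto
    then have "rep C \<in> R" "K = f C" using rep unfolding units_of_ring_def by auto
    thus "K \<in> quot_mult R d" unfolding quot_mult_def f_def by blast
  qed
  ultimately show ?thesis unfolding lepoll_def by blast
qed

end
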